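(* For any $u\equiv 4,8\pmod{12}$ and $v\equiv 2,4\pmod 6$, there is no perfect 2-D $(u\times v,4,2)$-OOC.
   Context: A 2-D $(u\times v,4,2)$-OOC is a family $\mathcal C$ of $u\times v$ $(0,1)$-matrices of Hamming weight $4$ such that for all $A=(a_{ij}),B=(b_{ij})\in\mathcal C$ and integers $r$ with $A\ne B$ or $r\not\equiv0\pmod v$, $\sum_{i,j}a_{ij}b_{i,j+r}\le 2$ (column indices mod $v$). It is perfect if it has exactly $u(uv-1)(uv-2)/24$ codewords (equivalently, the cyclic column shifts of its codewords' supports cover each $3$-subset of $I_u\times Z_v$ exactly once). *)

theory Defs
  imports Main
begin

text \<open>A u x v (0,1)-matrix is represented by its support, a subset of
  {0..<u} x {0..<v} (row index, column index).\<close>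

definition is_matrix_support :: "nat \<Rightarrow> nat \<Rightarrow> (nat \<times> nat) set \<Rightarrow> bool" where
  "is_matrix_support u v A \<longleftrightarrow> A \<subseteq> {0..<u} \<times> {0..<v}"

definition correlation :: "nat \<Rightarrow> (nat \<times> nat) set \<Rightarrow> (nat \<times> nat) set \<Rightarrow> int \<Rightarrow> nat" where
  "correlation v A B r = card {(i, j) \<in> A. (i, nat ((int j + r) mod int v)) \<in> B}"

definition is_2D_OOC_4_2 :: "nat \<Rightarrow> nat \<Rightarrow> (nat \<times> nat) set set \<Rightarrow> bool" where
  "is_2D_OOC_4_2 u v C \<longleftrightarrow>
     (\<forall>A\<in>C. is_matrix_support u v A \<and> card A = 4) \<and>
     (\<forall>A\<in>C. \<forall>B\<in>C. \<forall>r::int. (A \<noteq> B \<or> \<not> (int v dvd r)) \<longrightarrow> correlation v A B r \<le> 2)"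

definition is_perfect_2D_OOC_4_2 :: "nat \<Rightarrow> nat \<Rightarrow> (nat \<times> nat) set set \<Rightarrow> bool" where
  "is_perfect_2D_OOC_4_2 u v C \<longleftrightarrow>
     is_2D_OOC_4_2 u v C \<and> finite C \<and> 24 * card C = u * (u * v - 1) * (u * v - 2)"

end

theory Submission
  imports Defs
begin

lemma choose3: "6 * (n choose 3) = n * (n - 1) * (n - (2::nat))"
proof (induction n)
  case 0 then show ?case by simp
next
  case (Suc n)
  have e: "Suc n choose 3 = (n choose 2) + (n choose 3)"
    by (simp add: numeral_3_eq_3 numeral_2_eq_2)
  have ev: "even (n * (n - 1))" by (cases "even n") auto
  have "2 * (n choose 2) = n * (n - 1)" using ev by (simp add: choose_two)
  then show ?case using Suc e
    by (cases n; cases "n - 1"; simp add: algebra_simps)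
qed

lemma card4_distinct:
  assumes "card {a, b, c, d} = 4" "a \<noteq> b"
  shows "c \<noteq> a \<and> c \<noteq> b \<and> d \<noteq> a \<and> d \<noteq> b \<and> d \<noteq> c"
  using assms by (auto simp: card_insert_if split: if_splits)

lemma even_inv:
  assumes "finite S" "\<forall>y\<in>S. \<rho> y \<in> S \<and> \<rho> (\<rho> y) = y \<and> \<rho> y \<noteq> y"
  shows "even (card S)"
  using assms
proof (induction "card S" arbitrary: S rule: less_induct)
  case less
  show ?case
  proof (cases "S = {}")
    case True then show ?thesis by simp
  next
    case False
    then obtain y where y: "y \<in> S" by blast
    let ?S = "S - {y, \<rho> y}"
    have sub: "{y, \<rho> y} \<subseteq> S" using y less.prems by auto
    have c2: "card {y, \<rho> y} = 2" using y less.prems by auto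
    have "card {y, \<rho> y} \<le> card S" using sub less.prems card_mono by blast
    then have c: "card S = card ?S + 2" using sub c2 less.prems
      by (simp add: card_Diff_subset)
    have "even (card ?S)"
    proof (rule less.hyps)
      show "card ?S < card S" using c by simp
      show "finite ?S" using less.prems by simp
      show "\<forall>z\<in>?S. \<rho> z \<in> ?S \<and> \<rho> (\<rho> z) = z \<and> \<rho> z \<noteq> z"
      proof
        fix z assume z: "z \<in> ?S"
        then have zS: "z \<in> S" "z \<noteq> y" "z \<noteq> \<rho> y" by auto
        have "\<rho> z \<noteq> y" using zS less.prems(2) y by metis
        moreover have "\<rho> z \<noteq> \<rho> y" using zS less.prems(2) y by metis
        ultimately show "\<rho> z \<in> ?S \<and> \<rho> (\<rho> z) = z \<and> \<rho> z \<noteq> z"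
          using zS less.prems(2) by auto
      qed
    qed
    then show ?thesis using c by simp
  qed
qed

definition sh :: "nat \<Rightarrow> int \<Rightarrow> nat \<times> nat \<Rightarrow> nat \<times> nat" where
  "sh v r p = (fst p, nat ((int (snd p) + r) mod int v))"

lemma sh_sh: "v > 0 \<Longrightarrow> sh v r (sh v s p) = sh v (r + s) p"
proof -
  assume v: "v > 0"
  have "int (nat ((int (snd p) + s) mod int v)) = (int (snd p) + s) mod int v"
    using v by simp
  then show ?thesis unfolding sh_def
    by (simp add: mod_add_right_eq add.commute add.left_commute add.assoc)
qed

lemma sh_0: "snd p < v \<Longrightarrow> sh v 0 p = p"
  by (cases p) (simp add: sh_def)

lemma sh_cong: "r mod int v = s mod int v \<Longrightarrow> sh v r p = sh v s p"
  unfolding sh_def by (metis mod_add_right_eq)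

lemma sh_snd: "v > 0 \<Longrightarrow> snd (sh v r p) < v"
  by (simp add: sh_def nat_less_iff)

lemma sh_fst[simp]: "fst (sh v r p) = fst p"
  by (simp add: sh_def)

lemma sh_inv: "v > 0 \<Longrightarrow> snd p < v \<Longrightarrow> sh v (-r) (sh v r p) = p"
  by (simp add: sh_sh sh_0)

lemma corr_sh: "correlation v A B r = card {p\<in>A. sh v r p \<in> B}"
  unfolding correlation_def sh_def
  by (rule arg_cong[where f=card]) auto

locale ooc =
  fixes u v :: nat and C :: "(nat \<times> nat) set set"
  assumes ooc: "is_2D_OOC_4_2 u v C" and finC: "finite C"
    and cnt: "24 * card C = u * (u * v - 1) * (u * v - 2)" and vpos: "v > 0"
begin

definition "P = {0..<u} \<times> {0..<v}"
definition "Blk = {B. \<exists>A\<in>C. \<exists>r. B = sh v r ` A}"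

lemma AP: "A \<in> C \<Longrightarrow> A \<subseteq> P"
  using ooc unfolding is_2D_OOC_4_2_def is_matrix_support_def P_def by blast

lemma cardA: "A \<in> C \<Longrightarrow> card A = 4"
  using ooc unfolding is_2D_OOC_4_2_def by blast

lemma corr_le: "A \<in> C \<Longrightarrow> B \<in> C \<Longrightarrow> A \<noteq> B \<or> \<not> int v dvd r \<Longrightarrow> correlation v A B r \<le> 2"
  using ooc unfolding is_2D_OOC_4_2_def by blast

lemma finA: "A \<in> C \<Longrightarrow> finite A"
  using cardA by (metis card.infinite zero_neq_numeral)

lemma shP: "p \<in> P \<Longrightarrow> sh v r p \<in> P"
  using sh_snd[OF vpos, of r p] unfolding P_def by (cases "sh v r p") (auto simp: sh_def)

lemma inj_sh: "inj_on (sh v r) P"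
proof (rule inj_onI)
  fix p q assume pq: "p \<in> P" "q \<in> P" "sh v r p = sh v r q"
  have p: "snd p < v" and q: "snd q < v" using pq unfolding P_def by auto
  have "p = sh v (-r) (sh v r p)" using sh_inv[OF vpos p] by simp
  also have "\<dots> = sh v (-r) (sh v r q)" using pq(3) by simp
  also have "\<dots> = q" using sh_inv[OF vpos q] by simp
  finally show "p = q" .
qed

lemma packing:
  assumes A: "A \<in> C" and B: "B \<in> C" and TA: "T \<subseteq> sh v r ` A" and TB: "T \<subseteq> sh v s ` B"
    and c3: "3 \<le> card T"
  shows "A = B \<and> int v dvd (r - s)"
proof -
  define S where "S = {p\<in>A. sh v (r - s) p \<in> B}"
  have "T \<subseteq> sh v r ` S"
  proof
    fix t assume t: "t \<in> T"
    then obtain a where a: "a \<in> A" "t = sh v r a" using TA by blast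
    obtain b where b: "b \<in> B" "t = sh v s b" using TB t by blast
    have bP: "snd b < v" using AP[OF B] b(1) unfolding P_def by auto
    have "sh v (-s) t = b" using b bP sh_inv[OF vpos] by simp
    moreover have "sh v (-s) t = sh v (r - s) a" using a(2) sh_sh[OF vpos] by simp
    ultimately have "a \<in> S" using a b unfolding S_def by auto
    then show "t \<in> sh v r ` S" using a by blast
  qed
  moreover have "finite S" using finA[OF A] unfolding S_def by simp
  ultimately have "card T \<le> card S"
    by (meson card_image_le card_mono finite_imageI le_trans)
  then have c: "correlation v A B (r - s) \<ge> 3" using c3 unfolding corr_sh S_def by simp
  show ?thesis
  proof (rule ccontr)
    assume "\<not> ?thesis"
    then have "correlation v A B (r - s) \<le> 2" using corr_le[OF A B] by blast
    then show False using c by simp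
  qed
qed

lemma shift_eq: "int v dvd (r - s) \<Longrightarrow> sh v r ` A = sh v s ` A"
proof -
  assume "int v dvd (r - s)"
  then have "r mod int v = s mod int v" by (simp add: mod_eq_dvd_iff)
  then show ?thesis using sh_cong by (metis image_cong)
qed

lemma blk_sub: "B \<in> Blk \<Longrightarrow> B \<subseteq> P"
proof -
  assume "B \<in> Blk"
  then obtain A r where A: "A \<in> C" "B = sh v r ` A" unfolding Blk_def by blast
  show ?thesis unfolding A(2) using AP[OF A(1)] shP by blast
qed

lemma blk_card: "B \<in> Blk \<Longrightarrow> card B = 4"
proof -
  assume "B \<in> Blk"
  then obtain A r where A: "A \<in> C" "B = sh v r ` A" unfolding Blk_def by blast
  have "inj_on (sh v r) A" using inj_on_subset[OF inj_sh AP[OF A(1)]] .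
  then show ?thesis unfolding A(2) using cardA[OF A(1)] by (simp add: card_image)
qed

lemma blk_unique:
  assumes "B1 \<in> Blk" "B2 \<in> Blk" "T \<subseteq> B1" "T \<subseteq> B2" "3 \<le> card T"
  shows "B1 = B2"
proof -
  obtain A1 r1 where 1: "A1 \<in> C" "B1 = sh v r1 ` A1" using assms(1) unfolding Blk_def by blast
  obtain A2 r2 where 2: "A2 \<in> C" "B2 = sh v r2 ` A2" using assms(2) unfolding Blk_def by blast
  have "A1 = A2 \<and> int v dvd (r1 - r2)" using packing[OF 1(1) 2(1)] assms 1 2 by blast
  then show ?thesis using 1 2 shift_eq by metis
qed

lemma blk_shift: "B \<in> Blk \<Longrightarrow> sh v h ` B \<in> Blk"
proof -
  assume "B \<in> Blk"
  then obtain A r where A: "A \<in> C" "B = sh v r ` A" unfolding Blk_def by blast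
  have "sh v h ` B = sh v (h + r) ` A" unfolding A(2) image_image using sh_sh[OF vpos] by simp
  then show ?thesis using A unfolding Blk_def by blast
qed

lemma finP: "finite P" unfolding P_def by simp
lemma cardP: "card P = u * v" unfolding P_def by (simp add: card_cartesian_product)

lemma cover:
  assumes TP: "T \<subseteq> P" and T3: "card T = 3"
  shows "\<exists>B\<in>Blk. T \<subseteq> B"
proof -
  define Sub where "Sub A = {S. S \<subseteq> A \<and> card S = (3::nat)}" for A :: "(nat \<times> nat) set"
  define D where "D = (SIGMA A:C. {0..<int v} \<times> Sub A)"
  define \<Phi> where "\<Phi> = (\<lambda>(A :: (nat \<times> nat) set, r :: int, S :: (nat \<times> nat) set). sh v r ` S)"
  define Tr where "Tr = {T. T \<subseteq> P \<and> card T = 3}"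
  have cSub: "card (Sub A) = 4" if "A \<in> C" for A
    unfolding Sub_def using n_subsets[OF finA[OF that], of 3] cardA[OF that]
    by (simp add: numeral_3_eq_3 numeral_eq_Suc)
  have fSub: "finite (Sub A)" if "A \<in> C" for A
  proof -
    have "Sub A \<subseteq> Pow A" unfolding Sub_def by auto
    then show ?thesis using finA[OF that] finite_subset by blast
  qed
  have cD: "card D = card C * (v * 4)"
  proof -
    have "card D = (\<Sum>A\<in>C. card ({0..<int v} \<times> Sub A))"
      unfolding D_def using finC fSub by (subst card_SigmaI) auto
    also have "\<dots> = (\<Sum>A\<in>C. v * 4)"
      using cSub by (intro sum.cong) (auto simp: card_cartesian_product)
    finally show ?thesis by simp
  qed
  have cTr: "card Tr = (u * v) choose 3"
    unfolding Tr_def using n_subsets[OF finP, of 3] cardP by simp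
  have fTr: "finite Tr"
  proof -
    have "Tr \<subseteq> Pow P" unfolding Tr_def by auto
    then show ?thesis using finP finite_subset by blast
  qed
  have e1: "(u*v)*(u*v-1)*(u*v-2) = v * (u*(u*v-1)*(u*v-2))" by (simp add: ac_simps)
  have "6 * ((u*v) choose 3) = 6 * (card C * (v*4))"
    using choose3[of "u*v"] e1 cnt by simp
  then have eq: "card D = card Tr" using cD cTr by simp
  have inj: "inj_on \<Phi> D"
  proof (rule inj_onI)
    fix x y assume x: "x \<in> D" and y: "y \<in> D" and xy: "\<Phi> x = \<Phi> y"
    obtain A1 r1 S1 where x1: "x = (A1, r1, S1)" by (cases x) auto
    obtain A2 r2 S2 where y1: "y = (A2, r2, S2)" by (cases y) auto
    have A1: "A1 \<in> C" "0 \<le> r1" "r1 < int v" "S1 \<subseteq> A1" "card S1 = 3"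
      using x unfolding x1 D_def Sub_def by auto
    have A2: "A2 \<in> C" "0 \<le> r2" "r2 < int v" "S2 \<subseteq> A2" "card S2 = 3"
      using y unfolding y1 D_def Sub_def by auto
    have e: "sh v r1 ` S1 = sh v r2 ` S2" using xy unfolding x1 y1 \<Phi>_def by simp
    have inj1: "inj_on (sh v r1) A1" using inj_on_subset[OF inj_sh AP[OF A1(1)]] .
    have c3: "card (sh v r1 ` S1) = 3"
      using A1 inj_on_subset[OF inj1 A1(4)] by (simp add: card_image)
    have "A1 = A2 \<and> int v dvd (r1 - r2)"
    proof (rule packing[OF A1(1) A2(1), of "sh v r1 ` S1"])
      show "sh v r1 ` S1 \<subseteq> sh v r1 ` A1" using A1(4) by (rule image_mono)
      show "sh v r1 ` S1 \<subseteq> sh v r2 ` A2" unfolding e using A2(4) by (rule image_mono)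
    qed (use c3 in simp)
    moreover have "r1 mod int v = r1" "r2 mod int v = r2" using A1 A2 by simp_all
    ultimately have eqs: "A1 = A2" "r1 = r2" by (metis mod_eq_dvd_iff)+
    then have "S1 = S2" using e inj1 A1(4) A2(4) by (simp add: inj_on_image_eq_iff)
    then show "x = y" using eqs x1 y1 by simp
  qed
  have img: "\<Phi> ` D \<subseteq> Tr"
  proof
    fix T' assume "T' \<in> \<Phi> ` D"
    then obtain A r S where x: "(A, r, S) \<in> D" "T' = sh v r ` S" unfolding \<Phi>_def by auto
    have A1: "A \<in> C" "S \<subseteq> A" "card S = 3" using x unfolding D_def Sub_def by auto
    have inj1: "inj_on (sh v r) A" using inj_on_subset[OF inj_sh AP[OF A1(1)]] .
    have "card T' = 3" using x A1 inj_on_subset[OF inj1 A1(2)] by (simp add: card_image)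
    moreover have "T' \<subseteq> P" using x(2) A1 AP shP by blast
    ultimately show "T' \<in> Tr" unfolding Tr_def by simp
  qed
  have "\<Phi> ` D = Tr"
    using card_subset_eq[OF fTr img] card_image[OF inj] eq by simp
  moreover have "T \<in> Tr" unfolding Tr_def using TP T3 by simp
  ultimately obtain A r S where x: "(A, r, S) \<in> D" "T = sh v r ` S" unfolding \<Phi>_def by auto
  then have "T \<subseteq> sh v r ` A" "A \<in> C" unfolding D_def Sub_def by auto
  then show ?thesis unfolding Blk_def by blast
qed

lemma main:
  assumes ev: "even v" and ue: "even u" and upos: "u > 0"
  shows False
proof -
  define h where "h = v div 2"
  have v2: "v = 2 * h" "h > 0" using ev vpos unfolding h_def by auto
  define \<sigma> where "\<sigma> = sh v (int h)"
  have \<sigma>P: "\<sigma> p \<in> P" if "p \<in> P" for p using shP[OF that] unfolding \<sigma>_def .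
  have \<sigma>\<sigma>: "\<sigma> (\<sigma> p) = p" if "p \<in> P" for p
  proof -
    have ps: "snd p < v" using that unfolding P_def by auto
    have "\<sigma> (\<sigma> p) = sh v (int h + int h) p" unfolding \<sigma>_def by (simp add: sh_sh[OF vpos])
    also have "\<dots> = sh v 0 p" by (rule sh_cong) (simp add: v2)
    also have "\<dots> = p" using sh_0[OF ps] .
    finally show ?thesis .
  qed
  define x0 :: "nat \<times> nat" where "x0 = (0, 0)"
  define x1 :: "nat \<times> nat" where "x1 = (0, h)"
  have x0P: "x0 \<in> P" and x1P: "x1 \<in> P" using upos v2 unfolding x0_def x1_def P_def by auto
  have x01: "x0 \<noteq> x1" using v2 unfolding x0_def x1_def by auto
  have \<sigma>x0: "\<sigma> x0 = x1" using v2 unfolding \<sigma>_def x0_def x1_def sh_def by simp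
  have \<sigma>x1: "\<sigma> x1 = x0" using \<sigma>\<sigma>[OF x0P] \<sigma>x0 by simp
  define Y where "Y = P - {x0, x1}"
  define R where "R y z \<longleftrightarrow> {x0, x1, y, z} \<in> Blk" for y z
  have Rd: "y \<noteq> x0 \<and> y \<noteq> x1 \<and> z \<noteq> x0 \<and> z \<noteq> x1 \<and> z \<noteq> y" if "R y z" for y z
    using card4_distinct[OF blk_card[OF that[unfolded R_def]] x01] by auto
  have RY: "y \<in> Y \<and> z \<in> Y" if "R y z" for y z
    using blk_sub[OF that[unfolded R_def]] Rd[OF that] unfolding Y_def by auto
  have Rsym: "R z y" if "R y z" for y z
    using that unfolding R_def by (simp add: insert_commute)
  have Rex: "\<exists>z. R y z" if y: "y \<in> Y" for y
  proof -
    let ?T = "{x0, x1, y}"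
    have cT: "card ?T = 3" using y x01 unfolding Y_def by auto
    have TP: "?T \<subseteq> P" using y x0P x1P unfolding Y_def by auto
    obtain B where B: "B \<in> Blk" "?T \<subseteq> B" using cover[OF TP cT] by blast
    have cB: "card B = 4" using blk_card[OF B(1)] .
    have "card (B - ?T) = 1" using cB cT B(2) by (simp add: card_Diff_subset)
    then obtain z where z: "z \<in> B" "z \<notin> ?T" by (metis Diff_iff card_1_singletonE insertI1)
    have sub: "{x0, x1, y, z} \<subseteq> B" using B(2) z by auto
    have "{x0, x1, y, z} = insert z ?T" by auto
    then have "card {x0, x1, y, z} = 4" using z(2) cT by simp
    then have "{x0, x1, y, z} = B"
      using card_subset_eq[OF _ sub] cB blk_sub[OF B(1)] finP finite_subset by metis
    then have "R y z" unfolding R_def using B(1) by simp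
    then show ?thesis by blast
  qed
  have Runi: "z1 = z2" if "R y z1" "R y z2" for y z1 z2
  proof -
    let ?T = "{x0, x1, y}"
    have cT: "card ?T = 3" using Rd[OF that(1)] x01 by auto
    have "{x0, x1, y, z1} = {x0, x1, y, z2}"
      by (rule blk_unique[OF that[unfolded R_def], of ?T]) (use cT in auto)
    then show ?thesis using Rd[OF that(1)] Rd[OF that(2)] by auto
  qed
  have R\<sigma>: "R (\<sigma> y) (\<sigma> z)" if "R y z" for y z
  proof -
    have "\<sigma> ` {x0, x1, y, z} \<in> Blk" using blk_shift[OF that[unfolded R_def]] unfolding \<sigma>_def .
    moreover have "\<sigma> ` {x0, x1, y, z} = {x0, x1, \<sigma> y, \<sigma> z}" using \<sigma>x0 \<sigma>x1 by auto
    ultimately show ?thesis unfolding R_def by simp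
  qed
  have Rnot: False if "R y (\<sigma> y)" for y
  proof -
    let ?B = "{x0, x1, y, \<sigma> y}"
    have yP: "y \<in> P" using RY[OF that] unfolding Y_def by auto
    have BB: "?B \<in> Blk" using that unfolding R_def .
    then obtain A r where A: "A \<in> C" "?B = sh v r ` A" unfolding Blk_def by blast
    have "\<sigma> ` ?B = ?B" using \<sigma>x0 \<sigma>x1 \<sigma>\<sigma>[OF yP] by auto
    moreover have "\<sigma> ` ?B = sh v (int h + r) ` A"
    proof -
      have "\<sigma> ` ?B = \<sigma> ` (sh v r ` A)" using A(2) by simp
      also have "\<dots> = sh v (int h + r) ` A"
        unfolding image_image \<sigma>_def by (simp add: sh_sh[OF vpos])
      finally show ?thesis .
    qed
    ultimately have s2: "?B \<subseteq> sh v (int h + r) ` A" by simp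
    have s1: "?B \<subseteq> sh v r ` A" using A(2) by simp
    have c: "3 \<le> card ?B" using blk_card[OF BB] by simp
    have "A = A \<and> int v dvd (r - (int h + r))"
      using packing[OF A(1) A(1) s1 s2 c] .
    then have "int v dvd int h" by (simp add: dvd_minus_iff)
    then have "v dvd h" by simp
    then have "v \<le> h" using dvd_imp_le v2(2) by blast
    then show False using v2 by simp
  qed
  define \<tau> where "\<tau> y = (THE z. R y z)" for y
  have \<tau>R: "R y (\<tau> y)" if "y \<in> Y" for y
  proof -
    have "\<exists>!z. R y z" using Rex[OF that] Runi by blast
    then show ?thesis unfolding \<tau>_def by (rule theI')
  qed
  have \<tau>\<tau>: "\<tau> (\<tau> y) = y" if "y \<in> Y" for y
    using Runi[OF \<tau>R[OF conjunct2[OF RY[OF \<tau>R[OF that]]]] Rsym[OF \<tau>R[OF that]]] .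
  have \<tau>\<sigma>: "\<tau> (\<sigma> y) = \<sigma> (\<tau> y)" if "y \<in> Y" for y
  proof -
    have r: "R (\<sigma> y) (\<sigma> (\<tau> y))" using R\<sigma>[OF \<tau>R[OF that]] .
    have "\<sigma> y \<in> Y" using RY[OF r] by simp
    from Runi[OF \<tau>R[OF this] r] show ?thesis .
  qed
  define rep where "rep p = (fst p, snd p mod h)" for p :: "nat \<times> nat"
  define Q where "Q = {0..<u} \<times> {0..<h}"
  define Y' where "Y' = Q - {x0}"
  have \<sigma>Q: "\<sigma> a = (fst a, snd a + h)" if "a \<in> Q" for a
  proof -
    have "snd a < h" using that unfolding Q_def by auto
    then have "(int (snd a) + int h) mod int v = int (snd a) + int h"
      using v2 by (intro mod_pos_pos_trivial) auto
    then show ?thesis unfolding \<sigma>_def sh_def by simp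
  qed
  have rep_char: "w = a \<or> w = \<sigma> a" if a: "a \<in> Q" and w: "w \<in> P" and e: "rep w = a" for a w
  proof -
    obtain i j where a1: "a = (i, j)" by (cases a)
    obtain i' j' where w1: "w = (i', j')" by (cases w)
    have j: "j < h" using a a1 unfolding Q_def by auto
    have j': "j' < 2 * h" using w w1 v2 unfolding P_def by auto
    have ii: "i' = i" "j' mod h = j" using e a1 w1 unfolding rep_def by auto
    have "j' = j \<or> j' = j + h"
    proof (cases "j' < h")
      case True then show ?thesis using ii by simp
    next
      case False
      then have "j' mod h = j' - h" using j' by (simp add: le_mod_geq)
      then show ?thesis using ii False by simp
    qed
    then show ?thesis using \<sigma>Q[OF a] a1 w1 ii by auto
  qed
  have rep_self: "rep a = a" "rep (\<sigma> a) = a" if "a \<in> Q" for a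
  proof -
    have "snd a < h" using that unfolding Q_def by auto
    then show "rep a = a" "rep (\<sigma> a) = a" using \<sigma>Q[OF that] unfolding rep_def by auto
  qed
  have QP: "Q \<subseteq> P" using v2 unfolding Q_def P_def by auto
  have Y'Y: "Y' \<subseteq> Y" using QP unfolding Y'_def Y_def Q_def x1_def by auto
  have repQ: "rep w \<in> Q" if "w \<in> P" for w using that v2 unfolding rep_def Q_def P_def by auto
  define \<rho> where "\<rho> y = rep (\<tau> y)" for y
  have inv: "\<forall>y\<in>Y'. \<rho> y \<in> Y' \<and> \<rho> (\<rho> y) = y \<and> \<rho> y \<noteq> y"
  proof
    fix y assume y': "y \<in> Y'"
    have y: "y \<in> Y" "y \<in> Q" using y' Y'Y unfolding Y'_def by auto
    define z where "z = \<tau> y"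
    have zY: "z \<in> Y" using RY[OF \<tau>R[OF y(1)]] unfolding z_def by simp
    have zP: "z \<in> P" using zY unfolding Y_def by simp
    define w where "w = rep z"
    have wQ: "w \<in> Q" using repQ[OF zP] unfolding w_def .
    have x0Q: "x0 \<in> Q" using upos v2 unfolding x0_def Q_def by auto
    have "w \<noteq> x0"
    proof
      assume "w = x0"
      then have "z = x0 \<or> z = \<sigma> x0" using rep_char[OF x0Q zP] unfolding w_def by simp
      then show False using zY \<sigma>x0 unfolding Y_def by auto
    qed
    then have wY': "w \<in> Y'" using wQ unfolding Y'_def by simp
    have "w \<noteq> y"
    proof
      assume "w = y"
      then have "z = y \<or> z = \<sigma> y" using rep_char[OF y(2) zP] unfolding w_def by simp
      then show False using Rd[OF \<tau>R[OF y(1)]] Rnot[of y] \<tau>R[OF y(1)] unfolding z_def by auto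
    qed
    moreover have "\<rho> w = y"
    proof -
      have wP: "w \<in> P" using wQ QP by auto
      have "z = w \<or> z = \<sigma> w" using rep_char[OF wQ zP] unfolding w_def by auto
      then have wz: "w = z \<or> w = \<sigma> z" using \<sigma>\<sigma>[OF wP] by auto
      moreover have "\<tau> z = y" using \<tau>\<tau>[OF y(1)] unfolding z_def .
      moreover have "\<tau> (\<sigma> z) = \<sigma> y" using \<tau>\<sigma>[OF zY] \<tau>\<tau>[OF y(1)] unfolding z_def by simp
      ultimately have "\<tau> w = y \<or> \<tau> w = \<sigma> y" by (elim disjE) simp_all
      then show ?thesis unfolding \<rho>_def using rep_self[OF y(2)] by auto
    qed
    ultimately show "\<rho> y \<in> Y' \<and> \<rho> (\<rho> y) = y \<and> \<rho> y \<noteq> y"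
      using wY' unfolding \<rho>_def w_def z_def by simp
  qed
  have finY': "finite Y'" unfolding Y'_def Q_def by simp
  have "even (card Y')" using even_inv[OF finY' inv] .
  moreover have "card Y' = u * h - 1"
  proof -
    have "x0 \<in> Q" using upos v2 unfolding x0_def Q_def by auto
    then show ?thesis unfolding Y'_def Q_def by (simp add: card_cartesian_product)
  qed
  moreover have "even (u * h)" "u * h > 0" using ue upos v2 by auto
  ultimately show False by simp
qed

end

theorem corollary5p5:
  fixes u v :: nat
  assumes "u mod 12 = 4 \<or> u mod 12 = 8"
    and "v mod 6 = 2 \<or> v mod 6 = 4"
  shows "\<not> (\<exists>C. is_perfect_2D_OOC_4_2 u v C)"
proof
  assume "\<exists>C. is_perfect_2D_OOC_4_2 u v C"
  then obtain C where C: "is_perfect_2D_OOC_4_2 u v C" by blast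
  have ev: "even v" "v > 0" using assms(2) by presburger+
  have eu: "even u" "u > 0" using assms(1) by presburger+
  interpret ooc u v C
    using C ev(2) unfolding is_perfect_2D_OOC_4_2_def by unfold_locales auto
  show False using main[OF ev(1) eu(1) eu(2)] .
qed

end
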